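(* Let $F$ be a Sturmian set on an alphabet with $k$ letters and let $X\subset F$ be a finite $F$-maximal bifix code of $F$-degree $d$. Let $P$ (resp. $S$) be the set of proper prefixes (resp. proper suffixes) of words of $X$, including the empty word. Then $\sum_{x\in X}|x|=\mathrm{Card}(P)+\mathrm{Card}(S)+(k-2)d$.
   Context: A word $u\in F$ is right-special if $ua\in F$ for at least two letters $a$. An infinite word $x$ is strict episturmian if its set of factors $F(x)$ is closed under reversal, has exactly one right-special word of each length, and each right-special factor $u$ has $ua\in F(x)$ for every letter $a$; a Sturmian set is the set of factors of a strict episturmian word. A bifix code is a set of nonempty words none of which is a proper prefix or proper suffix of another; $X\subset F$ is $F$-maximal bifix if not properly contained in a bifix code contained in $F$. A parse of $w$ with respect to $X$ is a triple $(v,x,u)$ with $w=vxu$, $v$ having no suffix in $X$, $x\in X^*$, $u$ having no prefix in $X$; $d_F(X)$ is the maximum over $w\in F$ of the number of parses. *)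

theory Defs
  imports Main "HOL-Library.Sublist"
begin

definition factors :: "(nat \<Rightarrow> 'a) \<Rightarrow> 'a list set" where
  "factors x = {w. \<exists>i. w = map x [i..<i + length w]}"

definition right_special :: "'a list set \<Rightarrow> 'a list \<Rightarrow> bool" where
  "right_special F u \<longleftrightarrow> (\<exists>a b. a \<noteq> b \<and> u @ [a] \<in> F \<and> u @ [b] \<in> F)"

definition strict_episturmian :: "'a set \<Rightarrow> (nat \<Rightarrow> 'a) \<Rightarrow> bool" where
  "strict_episturmian A x \<longleftrightarrow>
     (\<forall>i. x i \<in> A) \<and>
     (\<forall>w \<in> factors x. rev w \<in> factors x) \<and>
     (\<forall>n. \<exists>!u. length u = n \<and> right_special (factors x) u) \<and>
     (\<forall>u. right_special (factors x) u \<longrightarrow> (\<forall>a\<in>A. u @ [a] \<in> factors x))"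

definition sturmian_set :: "'a set \<Rightarrow> 'a list set \<Rightarrow> bool" where
  "sturmian_set A F \<longleftrightarrow> (\<exists>x. strict_episturmian A x \<and> F = factors x)"

definition bifix_code :: "'a list set \<Rightarrow> bool" where
  "bifix_code X \<longleftrightarrow> [] \<notin> X \<and>
     (\<forall>u\<in>X. \<forall>v\<in>X. \<not> strict_prefix u v \<and> \<not> strict_suffix u v)"

definition F_maximal_bifix :: "'a list set \<Rightarrow> 'a list set \<Rightarrow> bool" where
  "F_maximal_bifix F X \<longleftrightarrow> bifix_code X \<and> X \<subseteq> F \<and>
     \<not> (\<exists>Y. bifix_code Y \<and> Y \<subseteq> F \<and> X \<subset> Y)"

definition star :: "'a list set \<Rightarrow> 'a list set" where
  "star X = {w. \<exists>xs. set xs \<subseteq> X \<and> w = concat xs}"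

definition parses :: "'a list set \<Rightarrow> 'a list \<Rightarrow> ('a list \<times> 'a list \<times> 'a list) set" where
  "parses X w = {(v, y, u). w = v @ y @ u \<and>
      (\<forall>s. suffix s v \<longrightarrow> s \<notin> X) \<and> y \<in> star X \<and> (\<forall>p. prefix p u \<longrightarrow> p \<notin> X)}"

definition has_F_degree :: "'a list set \<Rightarrow> 'a list set \<Rightarrow> nat \<Rightarrow> bool" where
  "has_F_degree F X d \<longleftrightarrow> (\<forall>w\<in>F. card (parses X w) \<le> d) \<and> (\<exists>w\<in>F. card (parses X w) = d)"

definition proper_prefixes :: "'a list set \<Rightarrow> 'a list set" where
  "proper_prefixes X = {p. \<exists>x\<in>X. strict_prefix p x}"

definition proper_suffixes :: "'a list set \<Rightarrow> 'a list set" where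
  "proper_suffixes X = {s. \<exists>x\<in>X. strict_suffix s x}"

end

theory Submission
  imports Defs
begin


definition NP :: "'a list set \<Rightarrow> 'a list \<Rightarrow> bool" where
  "NP X u \<longleftrightarrow> (\<forall>p. prefix p u \<longrightarrow> p \<notin> X)"
definition NS :: "'a list set \<Rightarrow> 'a list \<Rightarrow> bool" where
  "NS X v \<longleftrightarrow> (\<forall>s. suffix s v \<longrightarrow> s \<notin> X)"
definition sig :: "'a list set \<Rightarrow> 'a list \<Rightarrow> nat" where
  "sig X w = card {u. suffix u w \<and> NP X u}"

lemma fin_suf: "finite {u. suffix u w \<and> P u}"
proof -
  have "{u. suffix u w \<and> P u} \<subseteq> set (suffixes w)" by auto
  then show ?thesis using finite_subset by blast
qed

lemma star_concat: "set xs \<subseteq> X \<Longrightarrow> concat xs \<in> star X"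
  unfolding star_def by blast

lemma bifix_eq_suffix:
  assumes "bifix_code X" "u \<in> X" "v \<in> X" "suffix u v" shows "u = v"
  using assms unfolding bifix_code_def strict_suffix_def by blast

lemma bifix_eq_prefix:
  assumes "bifix_code X" "u \<in> X" "v \<in> X" "prefix u v" shows "u = v"
  using assms unfolding bifix_code_def strict_prefix_def by blast

lemma decomp_exists:
  assumes "[] \<notin> X"
  shows "\<exists>v y. t = v @ y \<and> y \<in> star X \<and> NS X v"
proof (induction "length t" arbitrary: t rule: less_induct)
  case less
  show ?case
  proof (cases "NS X t")
    case True
    then show ?thesis by (intro exI[of _ t] exI[of _ "[]"]) (auto intro: star_concat[of "[]", simplified])
  next
    case False
    then obtain s where s: "suffix s t" "s \<in> X" unfolding NS_def by blast
    then obtain t' where t': "t = t' @ s" unfolding suffix_def by blast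
    have "s \<noteq> []" using assms s by auto
    then have "length t' < length t" using t' by simp
    with less obtain v y where vy: "t' = v @ y" "y \<in> star X" "NS X v" by blast
    then obtain xs where xs: "set xs \<subseteq> X" "y = concat xs" unfolding star_def by blast
    have "y @ s \<in> star X" using star_concat[of "xs @ [s]" X] xs s by simp
    then show ?thesis using vy t' by (intro exI[of _ v] exI[of _ "y @ s"]) simp
  qed
qed

lemma decomp_unique_aux:
  assumes bif: "bifix_code X"
  shows "set xs \<subseteq> X \<Longrightarrow> set xs' \<subseteq> X \<Longrightarrow> v @ concat xs = v' @ concat xs' \<Longrightarrow> NS X v \<Longrightarrow> NS X v'
    \<Longrightarrow> v = v' \<and> concat xs = concat xs'"
proof (induction xs arbitrary: xs' v v' rule: rev_induct)
  case Nil
  show ?case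
  proof (cases xs' rule: rev_exhaust)
    case Nil
    then show ?thesis using Nil.prems by simp
  next
    case (snoc ys x')
    then have "suffix x' v" "x' \<in> X" using Nil.prems by (auto simp: suffix_def)
    then show ?thesis using Nil.prems(4) unfolding NS_def by blast
  qed
next
  case (snoc x xs)
  show ?case
  proof (cases xs' rule: rev_exhaust)
    case Nil
    then have "suffix x v'" "x \<in> X" using snoc.prems by (auto simp: suffix_def)
    then show ?thesis using snoc.prems(5) unfolding NS_def by blast
  next
    case (snoc ys x')
    have e: "(v @ concat xs) @ x = (v' @ concat ys) @ x'" using snoc.prems(3) \<open>xs' = ys @ [x']\<close>
      by simp
    have "suffix x ((v' @ concat ys) @ x')" "suffix x' ((v' @ concat ys) @ x')"
      using e by (metis suffixI)+
    then have "suffix x x' \<or> suffix x' x" by (rule suffix_same_cases)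
    moreover have "x \<in> X" "x' \<in> X" using snoc.prems \<open>xs' = ys @ [x']\<close> by auto
    ultimately have "x = x'" using bifix_eq_suffix[OF bif] by metis
    then have e2: "v @ concat xs = v' @ concat ys" using e by simp
    have "v = v' \<and> concat xs = concat ys"
      using snoc.IH[of ys v v'] snoc.prems \<open>xs' = ys @ [x']\<close> e2 by auto
    then show ?thesis using \<open>x = x'\<close> \<open>xs' = ys @ [x']\<close> by simp
  qed
qed

lemma decomp_unique:
  assumes "bifix_code X" "v @ y = v' @ y'" "y \<in> star X" "y' \<in> star X" "NS X v" "NS X v'"
  shows "v = v' \<and> y = y'"
proof -
  obtain xs xs' where "set xs \<subseteq> X" "y = concat xs" "set xs' \<subseteq> X" "y' = concat xs'"
    using assms(3,4) unfolding star_def by blast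
  then show ?thesis using decomp_unique_aux[OF assms(1)] assms by blast
qed

lemma card_parses:
  assumes bif: "bifix_code X"
  shows "card (parses X w) = sig X w"
proof -
  have ne: "[] \<notin> X" using bif unfolding bifix_code_def by blast
  have "bij_betw (\<lambda>(v,y,u). u) (parses X w) {u. suffix u w \<and> NP X u}"
  proof (rule bij_betwI')
    fix a b assume "a \<in> parses X w" "b \<in> parses X w"
    then obtain v y u v' y' u' where a: "a = (v,y,u)" "w = v@y@u" "NS X v" "y \<in> star X"
      and b: "b = (v',y',u')" "w = v'@y'@u'" "NS X v'" "y' \<in> star X"
      unfolding parses_def NS_def by auto
    show "((\<lambda>(v,y,u). u) a = (\<lambda>(v,y,u). u) b) = (a = b)"
    proof
      assume "(\<lambda>(v,y,u). u) a = (\<lambda>(v,y,u). u) b"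
      then have "u = u'" using a b by simp
      then have "v @ y = v' @ y'" using a b by simp
      then show "a = b" using decomp_unique[OF bif] a b \<open>u = u'\<close> by blast
    qed simp
  next
    fix a assume "a \<in> parses X w"
    then show "(\<lambda>(v,y,u). u) a \<in> {u. suffix u w \<and> NP X u}"
      unfolding parses_def NP_def suffix_def by auto
  next
    fix u assume "u \<in> {u. suffix u w \<and> NP X u}"
    then obtain t where t: "w = t @ u" "NP X u" unfolding suffix_def by auto
    obtain v y where "t = v @ y" "y \<in> star X" "NS X v" using decomp_exists[OF ne] by blast
    then have "(v,y,u) \<in> parses X w" using t unfolding parses_def NS_def NP_def by auto
    then show "\<exists>a\<in>parses X w. u = (\<lambda>(v,y,u). u) a" by force
  qed
  then show ?thesis unfolding sig_def by (rule bij_betw_same_card)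
qed




lemma NP_snoc: "NP X (u @ [a]) \<longleftrightarrow> NP X u \<and> u @ [a] \<notin> X"
  unfolding NP_def by auto

lemma sig_snoc:
  assumes bif: "bifix_code X"
  shows "sig X w + (if NS X (w @ [a]) then 1 else 0) = sig X (w @ [a]) + (if NS X (w @ [a]) then 0 else 0)"
proof -
  have ne: "[] \<notin> X" using bif unfolding bifix_code_def by blast
  define B where "B = {u. suffix u w \<and> NP X u \<and> u @ [a] \<notin> X}"
  define D where "D = {u. suffix u w \<and> NP X u \<and> u @ [a] \<in> X}"
  have C: "{u. suffix u w \<and> NP X u} = B \<union> D" "B \<inter> D = {}" unfolding B_def D_def by auto
  have fB: "finite B" "finite D" unfolding B_def D_def by (rule fin_suf)+
  have s1: "{u. suffix u (w @ [a]) \<and> NP X u} = insert [] ((\<lambda>u. u @ [a]) ` B)"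
  proof (rule set_eqI, rule iffI)
    fix s assume "s \<in> {u. suffix u (w @ [a]) \<and> NP X u}"
    then show "s \<in> insert [] ((\<lambda>u. u @ [a]) ` B)" unfolding B_def using NP_snoc[of X _ a]
      by (auto simp only: suffix_snoc mem_Collect_eq)
  next
    fix s assume "s \<in> insert [] ((\<lambda>u. u @ [a]) ` B)"
    then show "s \<in> {u. suffix u (w @ [a]) \<and> NP X u}" unfolding B_def using NP_snoc[of X _ a] ne
      by (auto simp: NP_def)
  qed
  have "[] \<notin> (\<lambda>u. u @ [a]) ` B" by auto
  moreover have "inj_on (\<lambda>u. u @ [a]) B" by (auto intro: inj_onI)
  ultimately have c1: "sig X (w @ [a]) = Suc (card B)"
    unfolding sig_def s1 using fB by (simp add: card_image)
  have c2: "sig X w = card B + card D" unfolding sig_def C(1) using card_Un_disjoint[OF fB C(2)] .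
  have cD: "card D = (if NS X (w @ [a]) then 0 else 1)"
  proof (cases "NS X (w @ [a])")
    case True
    have "D = {}" using True unfolding D_def NS_def by (auto simp: suffix_def)
    then show ?thesis using True by simp
  next
    case False
    then obtain s where s: "suffix s (w @ [a])" "s \<in> X" unfolding NS_def by blast
    then have "s \<noteq> []" using ne by auto
    then obtain u0 where u0: "s = u0 @ [a]" "suffix u0 w" using s by auto
    have "NP X u0"
    proof (unfold NP_def, intro allI impI)
      fix p assume "prefix p u0"
      then have "strict_prefix p s" using u0 by (auto simp: strict_prefix_def prefix_def)
      then show "p \<notin> X" using bif s(2) unfolding bifix_code_def by blast
    qed
    have "D = {u0}"
    proof
      show "{u0} \<subseteq> D" using u0 s \<open>NP X u0\<close> unfolding D_def by auto
      show "D \<subseteq> {u0}"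
      proof
        fix u assume "u \<in> D"
        then have u: "suffix u w" "u @ [a] \<in> X" unfolding D_def by auto
        have "suffix (u@[a]) (w@[a])" "suffix s (w@[a])" using u s by auto
        then have "suffix (u@[a]) s \<or> suffix s (u@[a])" by (rule suffix_same_cases)
        then have "u @ [a] = s" using bifix_eq_suffix[OF bif] u s by metis
        then show "u \<in> {u0}" using u0 by simp
      qed
    qed
    then show ?thesis using False by simp
  qed
  show ?thesis using c1 c2 cD by (cases "NS X (w @ [a])") simp_all
qed

lemma sig_snoc':
  assumes "bifix_code X"
  shows "sig X (w @ [a]) = sig X w + (if NS X (w @ [a]) then 1 else 0)"
  using sig_snoc[OF assms, of w a] by simp

lemma sig_mono_app:
  assumes "bifix_code X" shows "sig X w \<le> sig X (w @ z)"
proof (induction z rule: rev_induct)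
  case Nil then show ?case by simp
next
  case (snoc a z)
  then show ?case using sig_snoc'[OF assms, of "w @ z" a] by simp
qed

lemma sig_mono_pre: "sig X v \<le> sig X (z @ v)"
  unfolding sig_def by (rule card_mono[OF fin_suf]) (auto intro: suffix_appendI)

lemma sig_strict:
  assumes "bifix_code X" "w \<noteq> []" "NS X (z @ w)"
  shows "sig X z + 1 \<le> sig X (z @ w)"
proof -
  obtain w' a where w: "w = w' @ [a]" using assms(2) by (cases w rule: rev_exhaust) auto
  have "sig X ((z @ w') @ [a]) = sig X (z @ w') + 1" using sig_snoc'[OF assms(1), of "z @ w'" a] assms(3) w by simp
  moreover have "sig X z \<le> sig X (z @ w')" by (rule sig_mono_app[OF assms(1)])
  ultimately show ?thesis using w by simp
qed




definition occ :: "(nat \<Rightarrow> 'a) \<Rightarrow> nat \<Rightarrow> 'a list \<Rightarrow> bool" where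
  "occ x i w \<longleftrightarrow> (\<forall>t<length w. x (i + t) = w ! t)"

lemma factors_occ: "w \<in> factors x \<longleftrightarrow> (\<exists>i. occ x i w)"
proof
  assume "w \<in> factors x"
  then obtain i where "w = map x [i..<i + length w]" unfolding factors_def by auto
  then have "occ x i w" unfolding occ_def by (metis add_diff_cancel_left' length_map length_upt nth_map_upt)
  then show "\<exists>i. occ x i w" ..
next
  assume "\<exists>i. occ x i w"
  then obtain i where o: "occ x i w" ..
  have "w = map x [i..<i + length w]" using o unfolding occ_def
    by (intro nth_equalityI) auto
  then show "w \<in> factors x" unfolding factors_def by auto
qed

lemma occ_append: "occ x i (u @ v) \<longleftrightarrow> occ x i u \<and> occ x (i + length u) v"
proof
  assume h: "occ x i (u @ v)"
  have "occ x i u" unfolding occ_def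
  proof (intro allI impI)
    fix t assume "t < length u"
    then show "x (i + t) = u ! t" using h[unfolded occ_def, rule_format, of t] by (simp add: nth_append)
  qed
  moreover have "occ x (i + length u) v" unfolding occ_def
  proof (intro allI impI)
    fix t assume "t < length v"
    then show "x (i + length u + t) = v ! t" using h[unfolded occ_def, rule_format, of "length u + t"]
      by (simp add: nth_append add.assoc)
  qed
  ultimately show "occ x i u \<and> occ x (i + length u) v" ..
next
  assume h: "occ x i u \<and> occ x (i + length u) v"
  show "occ x i (u @ v)" unfolding occ_def
  proof (intro allI impI)
    fix t assume t: "t < length (u @ v)"
    show "x (i + t) = (u @ v) ! t"
    proof (cases "t < length u")
      case True then show ?thesis using h unfolding occ_def by (simp add: nth_append)
    next
      case False
      then have "t - length u < length v" using t by simp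
      then have "x (i + length u + (t - length u)) = v ! (t - length u)" using h unfolding occ_def by blast
      then show ?thesis using False by (simp add: nth_append)
    qed
  qed
qed

lemma factors_infix: "u @ w @ v \<in> factors x \<Longrightarrow> w \<in> factors x"
  by (auto simp: factors_occ occ_append)

lemma factors_prefix: "w @ v \<in> factors x \<Longrightarrow> w \<in> factors x"
  using factors_infix[of "[]" w v x] by simp

lemma factors_suffix: "u @ w \<in> factors x \<Longrightarrow> w \<in> factors x"
  using factors_infix[of u w "[]" x] by simp

lemma factors_Nil: "[] \<in> factors x"
  by (auto simp: factors_occ occ_def)

lemma occ_map: "occ x i (map x [i..<i + n])"
  unfolding occ_def by simp

lemma late_occ:
  assumes rc: "\<forall>w \<in> factors x. rev w \<in> factors x" and w: "w \<in> factors x"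
  shows "\<exists>i\<ge>m. occ x i w"
proof -
  obtain i0 where o0: "occ x i0 w" using w by (auto simp: factors_occ)
  define q where "q = map x [0..<i0 + length w]"
  have "q \<in> factors x" unfolding factors_occ q_def using occ_map[of x 0] by auto
  then have "rev q \<in> factors x" using rc by blast
  then obtain j where oj: "occ x j (rev q)" by (auto simp: factors_occ)
  define K where "K = j + length q + m"
  define q' where "q' = map x [0..<K]"
  have "q' \<in> factors x" unfolding factors_occ q'_def using occ_map[of x 0] by auto
  then have "rev q' \<in> factors x" using rc by blast
  then obtain j' where oj': "occ x j' (rev q')" by (auto simp: factors_occ)
  have lq: "length q = i0 + length w" unfolding q_def by simp
  have "occ x (j' + m + i0) w"
  proof (unfold occ_def, intro allI impI)
    fix s assume s: "s < length w"
    have "x (j' + m + i0 + s) = rev q' ! (m + i0 + s)"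
      using oj' unfolding occ_def q'_def K_def using s lq by (simp add: add.assoc)
    also have "\<dots> = q' ! (K - Suc (m + i0 + s))"
      using s lq unfolding q'_def K_def by (simp add: rev_nth)
    also have "\<dots> = x (K - Suc (m + i0 + s))" using s lq unfolding q'_def K_def by simp
    also have "K - Suc (m + i0 + s) = j + (length q - Suc (i0 + s))" unfolding K_def using s lq by simp
    also have "x (j + (length q - Suc (i0 + s))) = rev q ! (length q - Suc (i0 + s))"
    proof -
      have "length q - Suc (i0 + s) < length (rev q)" using s lq by simp
      then show ?thesis using oj unfolding occ_def by blast
    qed
    also have "\<dots> = q ! (i0 + s)" using s lq by (simp add: rev_nth)
    also have "\<dots> = x (i0 + s)" using s unfolding q_def by simp
    also have "\<dots> = w ! s" using o0 s unfolding occ_def by simp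
    finally show "x (j' + m + i0 + s) = w ! s" .
  qed
  then show ?thesis by (intro exI[of _ "j' + m + i0"]) simp
qed

lemma recurrent:
  assumes rc: "\<forall>w \<in> factors x. rev w \<in> factors x" and u: "u \<in> factors x" and v: "v \<in> factors x"
  shows "\<exists>t. u @ t @ v \<in> factors x"
proof -
  obtain i where oi: "occ x i u" using u by (auto simp: factors_occ)
  obtain j where j: "j \<ge> i + length u" "occ x j v" using late_occ[OF rc v] by blast
  define t where "t = map x [i + length u..<j]"
  have "occ x (i + length u) t" using occ_map[of x "i + length u" "j - (i + length u)"] j(1)
    unfolding t_def by simp
  moreover have "i + length u + length t = j" using j(1) unfolding t_def by simp
  ultimately have "occ x i (u @ t @ v)" using oi j(2) by (simp add: occ_append add.assoc)
  then show ?thesis by (auto simp: factors_occ)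
qed




locale SC =
  fixes A :: "'a set" and x :: "nat \<Rightarrow> 'a" and X :: "'a list set" and d k :: nat
  assumes fA: "finite A" and cA: "card A = k" and ep: "strict_episturmian A x"
    and fX: "finite X" and bif: "bifix_code X" and XF: "X \<subseteq> factors x" and Xne: "X \<noteq> {}"
    and deg: "has_F_degree (factors x) X d"
begin

abbreviation "F \<equiv> factors x"
abbreviation "RS \<equiv> right_special F"
definition rs :: "nat \<Rightarrow> 'a list" where "rs n = (THE u. length u = n \<and> RS u)"
definition ext :: "'a list \<Rightarrow> 'a set" where "ext w = {a. w @ [a] \<in> F}"

lemma inA: "\<forall>i. x i \<in> A" using ep unfolding strict_episturmian_def by blast
lemma rc: "\<forall>w \<in> F. rev w \<in> F" using ep unfolding strict_episturmian_def by blast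
lemma ex1: "\<exists>!u. length u = n \<and> RS u" using ep unfolding strict_episturmian_def by blast
lemma rsall: "RS u \<Longrightarrow> a \<in> A \<Longrightarrow> u @ [a] \<in> F" using ep unfolding strict_episturmian_def by blast

lemma rs: "length (rs n) = n" "RS (rs n)"
  using theI'[OF ex1[of n]] unfolding rs_def by auto

lemma rs_unique: "length u = n \<Longrightarrow> RS u \<Longrightarrow> u = rs n"
  using ex1[of n] rs[of n] by blast

lemma RS_suffix: "RS (z @ u) \<Longrightarrow> RS u"
  unfolding right_special_def using factors_suffix[of z] by (metis append_assoc)

lemma RS_F: "RS u \<Longrightarrow> u \<in> F"
  unfolding right_special_def using factors_prefix by blast

lemma rs_F: "rs n \<in> F" using RS_F rs by blast

lemma ext_A: "ext w \<subseteq> A"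
proof
  fix a assume "a \<in> ext w"
  then obtain i where "occ x i (w @ [a])" unfolding ext_def by (auto simp: factors_occ)
  then have "x (i + length w) = a" unfolding occ_def by (metis length_append_singleton lessI nth_append_length)
  then show "a \<in> A" using inA by metis
qed

lemma ext_ne: "w \<in> F \<Longrightarrow> ext w \<noteq> {}"
proof -
  assume "w \<in> F"
  then obtain i where o: "occ x i w" by (auto simp: factors_occ)
  have "occ x i (w @ [x (i + length w)])" using o by (simp add: occ_append) (simp add: occ_def)
  then show "ext w \<noteq> {}" unfolding ext_def by (auto simp: factors_occ)
qed

lemma fin_ext: "finite (ext w)" using ext_A fA finite_subset by blast

lemma card_ext: "w \<in> F \<Longrightarrow> card (ext w) = (if w = rs (length w) then k else 1)"
proof -
  assume w: "w \<in> F"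
  show ?thesis
  proof (cases "w = rs (length w)")
    case True
    then have "ext w = A" using ext_A rsall[OF rs(2)[of "length w"]] unfolding ext_def by auto
    then show ?thesis using True cA by simp
  next
    case False
    then have "\<not> RS w" using rs_unique by blast
    then have "\<forall>a\<in>ext w. \<forall>b\<in>ext w. a = b" unfolding right_special_def ext_def by blast
    moreover obtain a where "a \<in> ext w" using ext_ne[OF w] by blast
    ultimately have "ext w = {a}" by blast
    then show ?thesis using False by simp
  qed
qed

lemma suffix_rs: "suffix u (rs m) \<Longrightarrow> u = rs (length u)"
  using RS_suffix rs(2) rs_unique unfolding suffix_def by metis

lemma rs_suffix: "j \<le> m \<Longrightarrow> suffix (rs j) (rs m)"
proof -
  assume "j \<le> m"
  have "suffix (drop (m - j) (rs m)) (rs m)" by (rule suffix_drop)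
  moreover have "length (drop (m - j) (rs m)) = j" using rs(1)[of m] \<open>j \<le> m\<close> by simp
  ultimately show ?thesis using suffix_rs by metis
qed

definition Fl :: "nat \<Rightarrow> 'a list set" where "Fl n = {w \<in> F. length w = n}"

lemma F_set: "w \<in> F \<Longrightarrow> set w \<subseteq> A"
proof
  fix a assume "w \<in> F" "a \<in> set w"
  then obtain i where "occ x i w" by (auto simp: factors_occ)
  moreover obtain t where "t < length w" "w ! t = a" using \<open>a \<in> set w\<close> by (metis in_set_conv_nth)
  ultimately show "a \<in> A" using inA unfolding occ_def by metis
qed

lemma fin_Fl: "finite (Fl n)"
  by (rule finite_subset[OF _ finite_lists_length_eq[OF fA, of n]]) (use F_set in \<open>auto simp: Fl_def\<close>)

lemma Fl_Suc: "Fl (Suc n) = (\<lambda>(w,a). w @ [a]) ` (SIGMA w:Fl n. ext w)"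
proof (rule set_eqI, rule iffI)
  fix v assume "v \<in> Fl (Suc n)"
  then have v: "v \<in> F" "length v = Suc n" unfolding Fl_def by auto
  then obtain w a where wa: "v = w @ [a]" by (cases v rule: rev_exhaust) auto
  have "w \<in> Fl n" using v wa factors_prefix[of w "[a]"] unfolding Fl_def by auto
  moreover have "a \<in> ext w" using v wa unfolding ext_def by simp
  ultimately show "v \<in> (\<lambda>(w,a). w @ [a]) ` (SIGMA w:Fl n. ext w)" using wa by force
next
  fix v assume "v \<in> (\<lambda>(w,a). w @ [a]) ` (SIGMA w:Fl n. ext w)"
  then show "v \<in> Fl (Suc n)" unfolding Fl_def ext_def by auto
qed

lemma sum_Fl_Suc: "(\<Sum>v\<in>Fl (Suc n). f v) = (\<Sum>w\<in>Fl n. \<Sum>a\<in>ext w. f (w @ [a]))"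
proof -
  have inj: "inj_on (\<lambda>(w,a). w @ [a]) (SIGMA w:Fl n. ext w)" by (auto intro!: inj_onI)
  have "(\<Sum>v\<in>Fl (Suc n). f v) = (\<Sum>p\<in>(SIGMA w:Fl n. ext w). f ((\<lambda>(w,a). w @ [a]) p))"
    unfolding Fl_Suc by (rule sum.reindex[OF inj, unfolded comp_def])
  also have "\<dots> = (\<Sum>w\<in>Fl n. \<Sum>a\<in>ext w. f (w @ [a]))"
    by (subst sum.Sigma) (auto simp: fin_Fl fin_ext split_def)
  finally show ?thesis .
qed

end



context SC begin

abbreviation "P \<equiv> proper_prefixes X"
abbreviation "S \<equiv> proper_suffixes X"

lemma neX: "[] \<notin> X" using bif unfolding bifix_code_def by blast

lemma sig_le: "w \<in> F \<Longrightarrow> sig X w \<le> d"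
  using deg card_parses[OF bif] unfolding has_F_degree_def by metis

lemma sig_ex: "\<exists>w0\<in>F. sig X w0 = d"
  using deg card_parses[OF bif] unfolding has_F_degree_def by metis

lemma Nil_P: "[] \<in> P"
proof -
  obtain x0 where "x0 \<in> X" using Xne by blast
  then have "x0 \<noteq> []" using neX by auto
  then show ?thesis using \<open>x0 \<in> X\<close> unfolding proper_prefixes_def by (auto simp: strict_prefix_def)
qed

lemma Nil_S: "[] \<in> S"
proof -
  obtain x0 where "x0 \<in> X" using Xne by blast
  then have "x0 \<noteq> []" using neX by auto
  then show ?thesis using \<open>x0 \<in> X\<close> unfolding proper_suffixes_def by (auto simp: strict_suffix_def)
qed

lemma pref_comp:
  assumes w: "w \<in> F" and np: "NP X w" shows "w \<in> P"
proof (cases "w = []")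
  case True then show ?thesis using Nil_P by simp
next
  case False
  obtain w0 where w0: "w0 \<in> F" "sig X w0 = d" using sig_ex by blast
  obtain t where y: "w @ t @ w0 \<in> F" using recurrent[OF rc w w0(1)] by blast
  have d1: "d \<le> sig X (t @ w0)" using sig_mono_pre[of X w0 t] w0 by simp
  have "\<not> NP X (w @ t @ w0)"
  proof
    assume npy: "NP X (w @ t @ w0)"
    define B where "B = {u. suffix u (t @ w0) \<and> NP X u}"
    define C where "C = {u. suffix u (w @ t @ w0) \<and> NP X u}"
    have i: "insert (w @ t @ w0) B \<subseteq> C"
      using npy unfolding B_def C_def by (auto intro: suffix_appendI)
    have n: "w @ t @ w0 \<notin> B"
      using False unfolding B_def by (auto dest: suffix_length_le)
    have fB: "finite B" and fC: "finite C" unfolding B_def C_def by (rule fin_suf)+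
    have "card (insert (w @ t @ w0) B) \<le> card C" by (rule card_mono[OF fC i])
    moreover have "card (insert (w @ t @ w0) B) = Suc (card B)" by (rule card_insert_disjoint[OF fB n])
    ultimately have "Suc (sig X (t @ w0)) \<le> sig X (w @ t @ w0)" unfolding sig_def B_def C_def by simp
    then show False using d1 sig_le[OF y] by simp
  qed
  then obtain p where p: "prefix p (w @ t @ w0)" "p \<in> X" unfolding NP_def by blast
  then have "prefix p w \<or> (\<exists>us. p = w @ us \<and> prefix us (t @ w0))" by (simp add: prefix_append)
  moreover have "\<not> prefix p w" using np p(2) unfolding NP_def by blast
  ultimately obtain us where us: "p = w @ us" by blast
  then have "us \<noteq> []" using np p(2) unfolding NP_def by auto
  then have "strict_prefix w p" using us by (auto simp: strict_prefix_def)
  then show ?thesis using p(2) unfolding proper_prefixes_def by blast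
qed

lemma suf_comp:
  assumes w: "w \<in> F" and ns: "NS X w" shows "w \<in> S"
proof (cases "w = []")
  case True then show ?thesis using Nil_S by simp
next
  case False
  obtain w0 where w0: "w0 \<in> F" "sig X w0 = d" using sig_ex by blast
  obtain t where y: "w0 @ t @ w \<in> F" using recurrent[OF rc w0(1) w] by blast
  have d1: "d \<le> sig X (w0 @ t)" using sig_mono_app[OF bif, of w0 t] w0 by simp
  have "\<not> NS X ((w0 @ t) @ w)"
  proof
    assume "NS X ((w0 @ t) @ w)"
    then have "sig X (w0 @ t) + 1 \<le> sig X ((w0 @ t) @ w)" using sig_strict[OF bif False] by blast
    then show False using d1 sig_le[OF y] by simp
  qed
  then obtain s where s: "suffix s ((w0 @ t) @ w)" "s \<in> X" unfolding NS_def by blast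
  then have "suffix s w \<or> (\<exists>xs'. s = xs' @ w \<and> suffix xs' (w0 @ t))" by (simp only: suffix_append)
  moreover have "\<not> suffix s w" using ns s(2) unfolding NS_def by blast
  ultimately obtain us where us: "s = us @ w" by blast
  then have "us \<noteq> []" using ns s(2) unfolding NS_def by auto
  then have "strict_suffix w s" using us by (auto simp: strict_suffix_def suffix_def)
  then show ?thesis using s(2) unfolding proper_suffixes_def by blast
qed

lemma P_iff: "u \<in> P \<longleftrightarrow> u \<in> F \<and> NP X u"
proof
  assume "u \<in> P"
  then obtain x0 where x0: "x0 \<in> X" "strict_prefix u x0" unfolding proper_prefixes_def by blast
  have "u \<in> F" using x0 XF factors_prefix unfolding strict_prefix_def prefix_def by blast
  moreover have "NP X u" unfolding NP_def
  proof (intro allI impI)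
    fix p assume "prefix p u"
    then have "strict_prefix p x0" using x0(2) by (meson prefix_order.le_less_trans)
    then show "p \<notin> X" using bif x0(1) unfolding bifix_code_def by blast
  qed
  ultimately show "u \<in> F \<and> NP X u" ..
qed (use pref_comp in blast)

lemma S_iff: "u \<in> S \<longleftrightarrow> u \<in> F \<and> NS X u"
proof
  assume "u \<in> S"
  then obtain x0 where x0: "x0 \<in> X" "strict_suffix u x0" unfolding proper_suffixes_def by blast
  have "u \<in> F" using x0 XF factors_suffix unfolding strict_suffix_def suffix_def by blast
  moreover have "NS X u" unfolding NS_def
  proof (intro allI impI)
    fix p assume "suffix p u"
    then have "strict_suffix p x0" using x0(2) by (meson suffix_order.le_less_trans)
    then show "p \<notin> X" using bif x0(1) unfolding bifix_code_def by blast
  qed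
  ultimately show "u \<in> F \<and> NS X u" ..
qed (use suf_comp in blast)

definition Lx :: nat where "Lx = Max (length ` X)"

lemma len_X: "u \<in> X \<Longrightarrow> length u \<le> Lx"
  unfolding Lx_def using fX by simp

lemma len_P: "u \<in> P \<Longrightarrow> length u < Lx"
  unfolding proper_prefixes_def using len_X prefix_length_less by fastforce

lemma len_S: "u \<in> S \<Longrightarrow> length u < Lx"
  unfolding proper_suffixes_def using len_X suffix_length_less by fastforce

lemma fin_P: "finite P"
proof -
  have "P \<subseteq> (\<Union>x0\<in>X. set (prefixes x0))" unfolding proper_prefixes_def by (auto simp: strict_prefix_def)
  then show ?thesis using fX finite_subset by (metis (no_types, lifting) List.finite_set finite_UN_I)
qed

lemma fin_S: "finite S"
proof -
  have "S \<subseteq> (\<Union>x0\<in>X. set (suffixes x0))" unfolding proper_suffixes_def by (auto simp: strict_suffix_def)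
  then show ?thesis using fX finite_subset by (metis (no_types, lifting) List.finite_set finite_UN_I)
qed

lemma sig_long:
  assumes v: "v \<in> F" "Lx \<le> length v" shows "sig X v = d"
proof -
  obtain w0 where w0: "w0 \<in> F" "sig X w0 = d" using sig_ex by blast
  obtain t where y: "w0 @ t @ v \<in> F" using recurrent[OF rc w0(1) v(1)] by blast
  have "d \<le> sig X (w0 @ t @ v)" using sig_mono_app[OF bif, of w0 "t @ v"] w0 by simp
  then have e: "sig X (w0 @ t @ v) = d" using sig_le[OF y] by simp
  have "{u. suffix u (w0 @ t @ v) \<and> NP X u} = {u. suffix u v \<and> NP X u}"
  proof (rule set_eqI, rule iffI)
    fix u assume u: "u \<in> {u. suffix u (w0 @ t @ v) \<and> NP X u}"
    then obtain z where "w0 @ t @ v = z @ u" by (auto simp: suffix_def)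
    then have "u \<in> F" using y factors_suffix by metis
    then have "u \<in> P" using u P_iff by blast
    then have "length u \<le> length v" using len_P v(2) by fastforce
    moreover have "suffix v (w0 @ t @ v)" by (simp add: suffix_appendI)
    ultimately have "suffix u v" using u suffix_length_suffix by blast
    then show "u \<in> {u. suffix u v \<and> NP X u}" using u by blast
  qed (auto intro: suffix_appendI)
  then show ?thesis using e unfolding sig_def by simp
qed

end



lemma sum_len:
  fixes f :: "nat \<Rightarrow> int"
  assumes "finite B" "\<forall>b\<in>B. length b < N"
  shows "(\<Sum>b\<in>B. f (length b)) = (\<Sum>n<N. f n * int (card {b\<in>B. length b = n}))"
proof -
  have "(\<Sum>b\<in>B. f (length b)) = (\<Sum>n\<in>{..<N}. \<Sum>b\<in>{b\<in>B. length b = n}. f (length b))"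
    by (rule sum.group[symmetric]) (use assms in auto)
  also have "\<dots> = (\<Sum>n<N. f n * int (card {b\<in>B. length b = n}))"
    by (rule sum.cong) auto
  finally show ?thesis .
qed

lemma tele1:
  fixes Xc Pc r :: "nat \<Rightarrow> int" and c :: int
  assumes "Xc 0 = 0" "\<And>n. Xc (Suc n) + Pc (Suc n) = Pc n + c * r n"
  shows "(\<Sum>n<Suc M. int n * Xc n) = (\<Sum>n<M. Pc n) - int M * Pc M + c * (\<Sum>n<M. (int n + 1) * r n)"
proof (induction M)
  case 0 then show ?case using assms by simp
next
  case (Suc M)
  have "(\<Sum>n<Suc (Suc M). int n * Xc n) = (\<Sum>n<Suc M. int n * Xc n) + (int M + 1) * Xc (Suc M)" by simp
  also have "Xc (Suc M) = Pc M + c * r M - Pc (Suc M)" using assms(2)[of M] by simp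
  finally show ?case using Suc.IH by (simp add: algebra_simps sum_distrib_left)
qed

lemma tele2:
  fixes Sc G h :: "nat \<Rightarrow> int" and c :: int
  assumes "\<And>n. Sc (Suc n) = G (Suc n) - G n - c * h n"
  shows "(\<Sum>n<Suc M. Sc n) = Sc 0 + G M - G 0 - c * (\<Sum>m<M. h m)"
proof (induction M)
  case 0 then show ?case by simp
next
  case (Suc M)
  then show ?case using assms[of M] by (simp add: algebra_simps)
qed

lemma tele3:
  fixes r :: "nat \<Rightarrow> int"
  shows "(\<Sum>m<M. (\<Sum>j<M. r j) - (\<Sum>j<Suc m. r j)) = (\<Sum>j<M. int j * r j)"
proof (induction M)
  case 0 then show ?case by simp
next
  case (Suc M)
  have "(\<Sum>m<Suc M. (\<Sum>j<Suc M. r j) - (\<Sum>j<Suc m. r j))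
     = (\<Sum>m<M. (\<Sum>j<M. r j) - (\<Sum>j<Suc m. r j)) + int M * r M"
    by (simp add: sum.distrib sum_subtractf algebra_simps)
  then show ?case using Suc.IH by simp
qed

context SC begin

definition rho :: "nat \<Rightarrow> int" where "rho n = (if rs n \<in> P then 1 else 0)"

lemma NP_P: "u \<in> P \<Longrightarrow> u \<notin> X"
  using P_iff unfolding NP_def by blast

lemma PX_level:
  "int (card {u\<in>X. length u = Suc n}) + int (card {u\<in>P. length u = Suc n})
    = int (card {u\<in>P. length u = n}) + (int k - 1) * rho n"
proof -
  define Pn where "Pn = {u\<in>P. length u = n}"
  have img: "{u\<in>X. length u = Suc n} \<union> {u\<in>P. length u = Suc n} = (\<lambda>(p,a). p @ [a]) ` (SIGMA p:Pn. ext p)"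
  proof (rule set_eqI, rule iffI)
    fix v assume v: "v \<in> {u\<in>X. length u = Suc n} \<union> {u\<in>P. length u = Suc n}"
    then obtain p a where pa: "v = p @ [a]" by (cases v rule: rev_exhaust) auto
    have "v \<in> F" using v XF P_iff by auto
    then have a: "a \<in> ext p" using pa unfolding ext_def by simp
    have "p \<in> P"
    proof (cases "v \<in> X")
      case True
      then show ?thesis using pa unfolding proper_prefixes_def strict_prefix_def by (auto intro!: bexI[of _ v])
    next
      case False
      then have "v \<in> P" using v by auto
      then obtain x0 where "x0 \<in> X" "strict_prefix v x0" unfolding proper_prefixes_def by blast
      moreover have "strict_prefix p v" using pa by (auto simp: strict_prefix_def)
      ultimately show ?thesis unfolding proper_prefixes_def using prefix_order.less_trans by blast
    qed
    then have "p \<in> Pn" using pa v unfolding Pn_def by auto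
    then show "v \<in> (\<lambda>(p,a). p @ [a]) ` (SIGMA p:Pn. ext p)" using a pa by force
  next
    fix v assume "v \<in> (\<lambda>(p,a). p @ [a]) ` (SIGMA p:Pn. ext p)"
    then obtain p a where pa: "v = p @ [a]" "p \<in> Pn" "a \<in> ext p" by auto
    have vF: "v \<in> F" using pa unfolding ext_def by simp
    have npp: "NP X p" using pa P_iff unfolding Pn_def by blast
    have lv: "length v = Suc n" using pa unfolding Pn_def by simp
    show "v \<in> {u\<in>X. length u = Suc n} \<union> {u\<in>P. length u = Suc n}"
    proof (cases "NP X v")
      case True
      then have "v \<in> P" using pref_comp vF by blast
      then show ?thesis using lv by simp
    next
      case False
      then obtain q where q: "prefix q v" "q \<in> X" unfolding NP_def by blast
      then have "q = v \<or> prefix q p" using pa(1) by simp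
      then have "q = v" using npp q(2) unfolding NP_def by blast
      then show ?thesis using q lv by simp
    qed
  qed
  have fXn: "finite {u\<in>X. length u = Suc n}" using fX by simp
  have fPn: "finite {u\<in>P. length u = Suc n}" using fin_P by simp
  have disj: "{u\<in>X. length u = Suc n} \<inter> {u\<in>P. length u = Suc n} = {}" using NP_P by blast
  have fPn': "finite Pn" unfolding Pn_def using fin_P by simp
  have inj: "inj_on (\<lambda>(p,a). p @ [a]) (SIGMA p:Pn. ext p)" by (auto intro!: inj_onI)
  have "card {u\<in>X. length u = Suc n} + card {u\<in>P. length u = Suc n} = card (SIGMA p:Pn. ext p)"
    using card_Un_disjoint[OF fXn fPn disj] img card_image[OF inj] by simp
  also have "\<dots> = (\<Sum>p\<in>Pn. card (ext p))" by (rule card_SigmaI) (use fPn' fin_ext in auto)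
  finally have e0: "card {u\<in>X. length u = Suc n} + card {u\<in>P. length u = Suc n}
      = (\<Sum>p\<in>Pn. card (ext p))" .
  have e1: "int (card {u\<in>X. length u = Suc n}) + int (card {u\<in>P. length u = Suc n})
      = (\<Sum>p\<in>Pn. int (card (ext p)))" unfolding of_nat_add[symmetric] of_nat_sum[symmetric] e0 ..
  have "(\<Sum>p\<in>Pn. int (card (ext p))) = (\<Sum>p\<in>Pn. 1 + (if p = rs n then int k - 1 else 0))"
  proof (rule sum.cong)
    fix p assume "p \<in> Pn"
    then have "p \<in> F" "length p = n" using P_iff unfolding Pn_def by auto
    then have "card (ext p) = (if p = rs n then k else 1)" using card_ext by simp
    then show "int (card (ext p)) = 1 + (if p = rs n then int k - 1 else 0)" by simp
  qed simp
  also have "\<dots> = int (card Pn) + (if rs n \<in> Pn then int k - 1 else 0)"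
    by (simp add: sum.distrib fPn')
  also have "(if rs n \<in> Pn then int k - 1 else 0) = (int k - 1) * rho n"
    unfolding Pn_def rho_def using rs(1)[of n] by simp
  finally show ?thesis using e1 unfolding Pn_def by simp
qed

end



lemma card_filter_int: "finite B \<Longrightarrow> int (card {v\<in>B. Q v}) = (\<Sum>v\<in>B. if Q v then 1 else 0)"
  using sum.inter_filter[of B "\<lambda>_. (1::int)" Q] by simp

context SC begin

definition g :: "'a list \<Rightarrow> int" where "g v = int (sig X v) - int d"
definition G :: "nat \<Rightarrow> int" where "G n = (\<Sum>v\<in>Fl n. g v)"

lemma S_level: "int (card {s\<in>S. length s = Suc n}) = G (Suc n) - G n - (int k - 1) * g (rs n)"
proof -
  have e: "{s\<in>S. length s = Suc n} = {v\<in>Fl (Suc n). NS X v}" using S_iff unfolding Fl_def by auto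
  have "int (card {v\<in>Fl (Suc n). NS X v}) = (\<Sum>v\<in>Fl (Suc n). if NS X v then 1 else 0)"
    by (rule card_filter_int[OF fin_Fl])
  also have "\<dots> = (\<Sum>w\<in>Fl n. \<Sum>a\<in>ext w. if NS X (w @ [a]) then 1 else 0)" by (rule sum_Fl_Suc)
  also have "\<dots> = (\<Sum>w\<in>Fl n. \<Sum>a\<in>ext w. g (w @ [a]) - g w)"
  proof (intro sum.cong refl)
    fix w a
    have "sig X (w @ [a]) = sig X w + (if NS X (w @ [a]) then 1 else 0)" by (rule sig_snoc'[OF bif])
    then show "(if NS X (w @ [a]) then 1 else 0) = g (w @ [a]) - g w" unfolding g_def by simp
  qed
  also have "\<dots> = (\<Sum>w\<in>Fl n. \<Sum>a\<in>ext w. g (w @ [a])) - (\<Sum>w\<in>Fl n. int (card (ext w)) * g w)"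
    by (simp add: sum_subtractf)
  also have "(\<Sum>w\<in>Fl n. \<Sum>a\<in>ext w. g (w @ [a])) = G (Suc n)" unfolding G_def by (rule sum_Fl_Suc[symmetric])
  also have "(\<Sum>w\<in>Fl n. int (card (ext w)) * g w) = (\<Sum>w\<in>Fl n. g w + (if w = rs n then (int k - 1) * g w else 0))"
  proof (rule sum.cong[OF refl])
    fix w assume "w \<in> Fl n"
    then have "w \<in> F" "length w = n" unfolding Fl_def by auto
    then have "card (ext w) = (if w = rs n then k else 1)" using card_ext by simp
    then show "int (card (ext w)) * g w = g w + (if w = rs n then (int k - 1) * g w else 0)"
      by (simp add: algebra_simps)
  qed
  also have "\<dots> = G n + (int k - 1) * g (rs n)"
  proof -
    have "rs n \<in> Fl n" unfolding Fl_def using rs_F rs(1) by simp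
    then show ?thesis unfolding G_def by (simp add: sum.distrib fin_Fl)
  qed
  finally show ?thesis using e by simp
qed

lemma sig_rs: "int (sig X (rs m)) = (\<Sum>j<Suc m. rho j)"
proof -
  have e: "{u. suffix u (rs m) \<and> NP X u} = rs ` {j\<in>{..<Suc m}. rs j \<in> P}"
  proof (rule set_eqI, rule iffI)
    fix u assume u: "u \<in> {u. suffix u (rs m) \<and> NP X u}"
    then have u1: "u = rs (length u)" using suffix_rs by blast
    have "length u \<le> m" using u suffix_length_le rs(1) by fastforce
    moreover obtain zs where "rs m = zs @ u" using u unfolding suffix_def by blast
    then have "u \<in> F" using rs_F[of m] factors_suffix by metis
    then have "u \<in> P" using u P_iff by blast
    ultimately show "u \<in> rs ` {j\<in>{..<Suc m}. rs j \<in> P}" by (intro image_eqI[where x="length u"]) (use u1 in auto)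
  next
    fix u assume "u \<in> rs ` {j\<in>{..<Suc m}. rs j \<in> P}"
    then obtain j where j: "u = rs j" "j \<le> m" "rs j \<in> P" by auto
    then show "u \<in> {u. suffix u (rs m) \<and> NP X u}" using rs_suffix P_iff by blast
  qed
  have inj: "inj_on rs {j\<in>{..<Suc m}. rs j \<in> P}" by (rule inj_onI) (metis rs(1))
  have "sig X (rs m) = card {j\<in>{..<Suc m}. rs j \<in> P}" unfolding sig_def e card_image[OF inj] ..
  then show ?thesis using card_filter_int[of "{..<Suc m}" "\<lambda>j. rs j \<in> P"] unfolding rho_def by simp
qed

lemma main_loc:
  "int (\<Sum>u\<in>X. length u) = int (card P) + int (card S) + (int k - 2) * int d"
proof -
  define c where "c = int k - 1"
  define Xc where "Xc n = int (card {u\<in>X. length u = n})" for n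
  define Pc where "Pc n = int (card {u\<in>P. length u = n})" for n
  define Sc where "Sc n = int (card {u\<in>S. length u = n})" for n
  define R where "R = (\<Sum>n<Lx. (int n + 1) * rho n)"
  define T where "T n = (\<Sum>j<n. rho j)" for n
  have "int (\<Sum>u\<in>X. length u) = (\<Sum>u\<in>X. int (length u))" by simp
  also have "\<dots> = (\<Sum>n<Suc Lx. int n * Xc n)" unfolding Xc_def
    by (rule sum_len) (use fX len_X in \<open>auto simp: less_Suc_eq_le\<close>)
  also have "\<dots> = (\<Sum>n<Lx. Pc n) - int Lx * Pc Lx + c * R" unfolding R_def
    by (rule tele1) (use neX PX_level in \<open>auto simp: Xc_def Pc_def c_def\<close>)
  also have "Pc Lx = 0" unfolding Pc_def using len_P fin_P by fastforce
  also have "(\<Sum>n<Lx. Pc n) = int (card P)"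
    using sum_len[of P Lx "\<lambda>_. 1"] fin_P len_P unfolding Pc_def by simp
  finally have A: "int (\<Sum>u\<in>X. length u) = int (card P) + c * R" by simp
  have "int (card S) = (\<Sum>n<Suc Lx. Sc n)"
    using sum_len[of S "Suc Lx" "\<lambda>_. 1"] fin_S len_S unfolding Sc_def by fastforce
  also have "\<dots> = Sc 0 + G Lx - G 0 - c * (\<Sum>m<Lx. g (rs m))"
    by (rule tele2) (use S_level in \<open>simp add: Sc_def c_def\<close>)
  also have "Sc 0 = 1"
  proof -
    have "{u\<in>S. length u = 0} = {[]}" using Nil_S by auto
    then show ?thesis unfolding Sc_def by simp
  qed
  also have "G Lx = 0" unfolding G_def g_def Fl_def using sig_long by (intro sum.neutral) auto
  also have "G 0 = 1 - int d"
  proof -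
    have "Fl 0 = {[]}" unfolding Fl_def using factors_Nil by auto
    moreover have "{u. suffix u [] \<and> NP X u} = {[]}" using neX unfolding NP_def by auto
    ultimately show ?thesis unfolding G_def g_def sig_def by simp
  qed
  finally have B: "int (card S) = int d - c * (\<Sum>m<Lx. g (rs m))" by simp
  have dT: "int d = T Lx"
  proof -
    have "sig X (rs Lx) = d" using sig_long rs_F rs(1) by simp
    then have "int d = (\<Sum>j<Suc Lx. rho j)" using sig_rs by metis
    moreover have "rho Lx = 0" unfolding rho_def using len_P rs(1)[of Lx] by fastforce
    ultimately show ?thesis unfolding T_def by simp
  qed
  have "(\<Sum>m<Lx. g (rs m)) = - (\<Sum>m<Lx. T Lx - T (Suc m))"
    unfolding g_def using sig_rs dT unfolding T_def by (simp add: sum_negf[symmetric])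
  also have "(\<Sum>m<Lx. T Lx - T (Suc m)) = (\<Sum>j<Lx. int j * rho j)" unfolding T_def by (rule tele3)
  finally have C: "(\<Sum>m<Lx. g (rs m)) = - (\<Sum>j<Lx. int j * rho j)" .
  have D: "R = (\<Sum>j<Lx. int j * rho j) + T Lx" unfolding R_def T_def
    by (simp add: algebra_simps sum.distrib)
  show ?thesis using A B C D dT unfolding c_def by (simp add: algebra_simps)
qed

end


theorem mainTheorem19:
  fixes A :: "'a set" and F X :: "'a list set" and k d :: nat
  assumes "finite A" and "card A = k"
    and "sturmian_set A F"
    and "finite X" and "F_maximal_bifix F X"
    and "has_F_degree F X d"
  shows "int (\<Sum>x\<in>X. length x) =
    int (card (proper_prefixes X)) + int (card (proper_suffixes X)) + (int k - 2) * int d"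
proof -
  obtain x where ep: "strict_episturmian A x" and Fx: "F = factors x"
    using assms(3) unfolding sturmian_set_def by blast
  have bif: "bifix_code X" and XF: "X \<subseteq> F" using assms(5) unfolding F_maximal_bifix_def by auto
  have Xne: "X \<noteq> {}"
  proof
    assume X0: "X = {}"
    have "[x 0] \<in> factors x" unfolding factors_occ occ_def by auto
    moreover have "bifix_code {[x 0]}" unfolding bifix_code_def by auto
    ultimately show False using assms(5) X0 Fx unfolding F_maximal_bifix_def by blast
  qed
  interpret SC A x X d k
    using assms ep bif XF Xne Fx by unfold_locales auto
  show ?thesis by (rule main_loc)
qed

end
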